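(* Let $M$ be a matroid on $S$ and $N$ a matroid on $T$ with $S\cap T=\emptyset$, and let $L=M\mathbin{\Box} N$. A set $C\subseteq S\cup T$ is a circuit of $L$ if and only if either $C\subseteq S$ and $C$ is a circuit of $M$, or $C\cap S$ is independent in $M$, the restriction $N|(C\cap T)$ has no isthmus, and $\lambda_M(C\cap S)+1=\nu_N(C\cap T)$.
   Context: For a matroid $M$ on $S$ write $\rho_M$ for rank, $\rho(M)=\rho_M(S)$, $\nu_M(A)=|A|-\rho_M(A)$, $\lambda_M(A)=\rho(M)-\rho_M(A)$. For matroids $M$ on $S$ and $N$ on $T$ with $S\cap T=\emptyset$, the free product $M\mathbin{\Box} N$ is the matroid on $S\cup T$ whose independent sets are those $A$ with $A\cap S$ independent in $M$ and $\lambda_M(A\cap S)\geq\nu_N(A\cap T)$. *)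

theory Defs
  imports Main
begin

definition matroid :: "'a set \<Rightarrow> ('a set \<Rightarrow> bool) \<Rightarrow> bool" where
  "matroid E indep \<longleftrightarrow>
     finite E \<and> indep {} \<and>
     (\<forall>I. indep I \<longrightarrow> I \<subseteq> E) \<and>
     (\<forall>I J. indep J \<and> I \<subseteq> J \<longrightarrow> indep I) \<and>
     (\<forall>I J. indep I \<and> indep J \<and> card I < card J \<longrightarrow> (\<exists>x \<in> J - I. indep (insert x I)))"

definition mrank :: "('a set \<Rightarrow> bool) \<Rightarrow> 'a set \<Rightarrow> nat" where
  "mrank indep A = Max (card ` {I. I \<subseteq> A \<and> indep I})"

definition nullity :: "('a set \<Rightarrow> bool) \<Rightarrow> 'a set \<Rightarrow> nat" where
  "nullity indep A = card A - mrank indep A"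

definition mlambda :: "'a set \<Rightarrow> ('a set \<Rightarrow> bool) \<Rightarrow> 'a set \<Rightarrow> nat" where
  "mlambda E indep A = mrank indep E - mrank indep A"

definition circuit :: "'a set \<Rightarrow> ('a set \<Rightarrow> bool) \<Rightarrow> 'a set \<Rightarrow> bool" where
  "circuit E indep C \<longleftrightarrow> C \<subseteq> E \<and> \<not> indep C \<and> (\<forall>x \<in> C. indep (C - {x}))"

definition basis :: "'a set \<Rightarrow> ('a set \<Rightarrow> bool) \<Rightarrow> 'a set \<Rightarrow> bool" where
  "basis E indep B \<longleftrightarrow> indep B \<and> (\<forall>I. indep I \<and> B \<subseteq> I \<longrightarrow> I = B)"

definition isthmus :: "'a set \<Rightarrow> ('a set \<Rightarrow> bool) \<Rightarrow> 'a \<Rightarrow> bool" where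
  "isthmus E indep e \<longleftrightarrow> e \<in> E \<and> (\<forall>B. basis E indep B \<longrightarrow> e \<in> B)"

definition restr_indep :: "('a set \<Rightarrow> bool) \<Rightarrow> 'a set \<Rightarrow> 'a set \<Rightarrow> bool" where
  "restr_indep indep X I \<longleftrightarrow> indep I \<and> I \<subseteq> X"

definition free_prod_indep ::
  "'a set \<Rightarrow> ('a set \<Rightarrow> bool) \<Rightarrow> 'a set \<Rightarrow> ('a set \<Rightarrow> bool) \<Rightarrow> 'a set \<Rightarrow> bool" where
  "free_prod_indep S indM T indN A \<longleftrightarrow>
     A \<subseteq> S \<union> T \<and> indM (A \<inter> S) \<and> mlambda S indM (A \<inter> S) \<ge> nullity indN (A \<inter> T)"

end

theory Submission
  imports Defs
begin

lemma m_fin: "matroid E ind \<Longrightarrow> finite E" by (simp add: matroid_def)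
lemma m_sub: "matroid E ind \<Longrightarrow> ind I \<Longrightarrow> I \<subseteq> E" by (simp add: matroid_def)
lemma m_empty: "matroid E ind \<Longrightarrow> ind {}" by (simp add: matroid_def)
lemma m_down: assumes "matroid E ind" "ind J" "I \<subseteq> J" shows "ind I"
proof -
  have "\<forall>I J. ind J \<and> I \<subseteq> J \<longrightarrow> ind I" using assms(1) by (simp add: matroid_def)
  then show ?thesis using assms(2,3) by blast
qed
lemma m_aug: assumes "matroid E ind" "ind I" "ind J" "card I < card J" shows "\<exists>x \<in> J - I. ind (insert x I)"
proof -
  have "\<forall>I J. ind I \<and> ind J \<and> card I < card J \<longrightarrow> (\<exists>x \<in> J - I. ind (insert x I))"
    using assms(1) by (simp add: matroid_def)
  then show ?thesis using assms(2,3,4) by blast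
qed
lemma m_ifin: assumes "matroid E ind" "ind I" shows "finite I"
  by (rule finite_subset[OF m_sub[OF assms] m_fin[OF assms(1)]])

lemma rank_set_fin:
  assumes "matroid E ind"
  shows "finite (card ` {I. I \<subseteq> A \<and> ind I})" "card ` {I. I \<subseteq> A \<and> ind I} \<noteq> {}"
proof -
  have "card ` {I. I \<subseteq> A \<and> ind I} \<subseteq> {0..card E}"
  proof
    fix n assume "n \<in> card ` {I. I \<subseteq> A \<and> ind I}"
    then obtain I where I: "ind I" "n = card I" by blast
    have "card I \<le> card E" by (rule card_mono[OF m_fin[OF assms] m_sub[OF assms I(1)]])
    then show "n \<in> {0..card E}" using I by simp
  qed
  then show "finite (card ` {I. I \<subseteq> A \<and> ind I})" using finite_subset by blast
  show "card ` {I. I \<subseteq> A \<and> ind I} \<noteq> {}" using m_empty[OF assms] by blast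
qed

lemma mrank_ex: "matroid E ind \<Longrightarrow> \<exists>I. I \<subseteq> A \<and> ind I \<and> card I = mrank ind A"
proof -
  assume m: "matroid E ind"
  have "Max (card ` {I. I \<subseteq> A \<and> ind I}) \<in> card ` {I. I \<subseteq> A \<and> ind I}"
    using Max_in[OF rank_set_fin[OF m]] .
  then obtain I where "I \<subseteq> A" "ind I" "card I = Max (card ` {I. I \<subseteq> A \<and> ind I})" by auto
  then show ?thesis unfolding mrank_def by blast
qed

lemma mrank_ge: "matroid E ind \<Longrightarrow> I \<subseteq> A \<Longrightarrow> ind I \<Longrightarrow> card I \<le> mrank ind A"
proof -
  assume m: "matroid E ind" and "I \<subseteq> A" "ind I"
  then have "card I \<in> card ` {I. I \<subseteq> A \<and> ind I}" by blast
  then show ?thesis unfolding mrank_def using Max_ge[OF rank_set_fin(1)[OF m]] by blast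
qed

lemma rank_mono: assumes m: "matroid E ind" and "A \<subseteq> B" shows "mrank ind A \<le> mrank ind B"
proof -
  obtain I where I: "I \<subseteq> A" "ind I" "card I = mrank ind A" using mrank_ex[OF m] by blast
  have "I \<subseteq> B" using I(1) assms(2) by (rule order_trans)
  have "card I \<le> mrank ind B" by (rule mrank_ge[OF m \<open>I \<subseteq> B\<close> I(2)])
  then show ?thesis using I(3) by simp
qed

lemma rank_le_card: assumes m: "matroid E ind" and "finite A" shows "mrank ind A \<le> card A"
proof -
  obtain I where I: "I \<subseteq> A" "ind I" "card I = mrank ind A" using mrank_ex[OF m] by blast
  have "card I \<le> card A" by (rule card_mono[OF assms(2) I(1)])
  then show ?thesis using I(3) by simp
qed

lemma rank_indep: assumes m: "matroid E ind" and i: "ind I" shows "mrank ind I = card I"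
proof -
  have "mrank ind I \<le> card I" using rank_le_card[OF m m_ifin[OF m i]] .
  moreover have "card I \<le> mrank ind I" using mrank_ge[OF m order_refl i] .
  ultimately show ?thesis by simp
qed

lemma rank_remove: assumes "matroid E ind" shows "mrank ind A \<le> mrank ind (A - {x}) + 1"
proof -
  obtain I where I: "I \<subseteq> A" "ind I" "card I = mrank ind A" using mrank_ex[OF assms] by blast
  have "ind (I - {x})" using m_down[OF assms I(2)] by blast
  moreover have "I - {x} \<subseteq> A - {x}" using I(1) by blast
  ultimately have "card (I - {x}) \<le> mrank ind (A - {x})" using mrank_ge[OF assms] by blast
  moreover have "card I \<le> card (I - {x}) + 1"
  proof (cases "x \<in> I")
    case True
    then show ?thesis using card.remove[OF m_ifin[OF assms I(2)] True] by simp
  next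
    case False
    then show ?thesis by simp
  qed
  ultimately show ?thesis using I(3) by linarith
qed

lemma isthmus_iff:
  assumes m: "matroid E ind" and y: "y \<in> Y"
  shows "isthmus Y (restr_indep ind Y) y \<longleftrightarrow> mrank ind (Y - {y}) < mrank ind Y"
proof
  assume isth: "isthmus Y (restr_indep ind Y) y"
  show "mrank ind (Y - {y}) < mrank ind Y"
  proof (rule ccontr)
    assume "\<not> ?thesis"
    then have ge: "mrank ind Y \<le> mrank ind (Y - {y})" by simp
    obtain I where I: "I \<subseteq> Y - {y}" "ind I" "card I = mrank ind (Y - {y})"
      using mrank_ex[OF m] by blast
    have "basis Y (restr_indep ind Y) I"
      unfolding basis_def restr_indep_def
    proof (intro conjI allI impI)
      show "ind I" "I \<subseteq> Y" using I by auto
      fix J assume J: "(ind J \<and> J \<subseteq> Y) \<and> I \<subseteq> J"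
      have "card J \<le> mrank ind Y" using mrank_ge[OF m] J by blast
      then have "card J \<le> card I" using ge I(3) by linarith
      moreover have "finite J" using m_ifin[OF m] J by blast
      moreover have "card I \<le> card J" using card_mono[of J I] J \<open>finite J\<close> by blast
      ultimately show "J = I" using card_subset_eq[of J I] J by simp
    qed
    then have "y \<in> I" using isth unfolding isthmus_def by blast
    then show False using I(1) by blast
  qed
next
  assume lt: "mrank ind (Y - {y}) < mrank ind Y"
  show "isthmus Y (restr_indep ind Y) y"
    unfolding isthmus_def
  proof (intro conjI allI impI)
    show "y \<in> Y" by fact
    fix B assume B: "basis Y (restr_indep ind Y) B"
    then have Bi: "ind B" "B \<subseteq> Y" and Bm: "\<And>J. ind J \<Longrightarrow> J \<subseteq> Y \<Longrightarrow> B \<subseteq> J \<Longrightarrow> J = B"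
      unfolding basis_def restr_indep_def by auto
    obtain I where I: "I \<subseteq> Y" "ind I" "card I = mrank ind Y" using mrank_ex[OF m] by blast
    have cB: "card I \<le> card B"
    proof (rule ccontr)
      assume "\<not> ?thesis"
      then have "card B < card I" by simp
      then obtain z where z: "z \<in> I - B" "ind (insert z B)" using m_aug[OF m Bi(1) I(2)] by blast
      then have "insert z B = B" using Bm[of "insert z B"] Bi I by blast
      then show False using z by blast
    qed
    show "y \<in> B"
    proof (rule ccontr)
      assume "y \<notin> B"
      then have "B \<subseteq> Y - {y}" using Bi by blast
      then have "card B \<le> mrank ind (Y - {y})" using mrank_ge[OF m] Bi by blast
      then show False using cB I lt by linarith
    qed
  qed
qed

theorem proposition3p7:
  fixes S T C :: "'a set" and indM indN :: "'a set \<Rightarrow> bool"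
  assumes "matroid S indM" and "matroid T indN" and "S \<inter> T = {}"
    and "C \<subseteq> S \<union> T"
  shows "circuit (S \<union> T) (free_prod_indep S indM T indN) C \<longleftrightarrow>
     ((C \<subseteq> S \<and> circuit S indM C) \<or>
      (indM (C \<inter> S) \<and>
       \<not> (\<exists>e. isthmus (C \<inter> T) (restr_indep indN (C \<inter> T)) e) \<and>
       mlambda S indM (C \<inter> S) + 1 = nullity indN (C \<inter> T)))"
proof -
  note mM = assms(1) and mN = assms(2)
  define X where "X = C \<inter> S"
  define Y where "Y = C \<inter> T"
  define L where "L = free_prod_indep S indM T indN"
  have finY: "finite Y" using m_fin[OF mN] Y_def by auto
  have finX: "finite X" using m_fin[OF mM] X_def by auto
  have nu0: "nullity indN {} = 0" by (simp add: nullity_def)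
  have Ldef: "\<And>A. L A \<longleftrightarrow> A \<subseteq> S \<union> T \<and> indM (A \<inter> S) \<and> nullity indN (A \<inter> T) \<le> mlambda S indM (A \<inter> S)"
    unfolding L_def free_prod_indep_def by simp
  show ?thesis
  proof (cases "Y = {}")
    case True
    then have CS: "C \<subseteq> S" using assms(4) Y_def by blast
    have LA: "\<And>A. A \<subseteq> C \<Longrightarrow> L A \<longleftrightarrow> indM A"
    proof -
      fix A assume "A \<subseteq> C"
      then have "A \<inter> S = A" "A \<inter> T = {}" using CS assms(3) by blast+
      then show "L A \<longleftrightarrow> indM A" using Ldef nu0 CS \<open>A \<subseteq> C\<close> by auto
    qed
    have "circuit (S \<union> T) L C \<longleftrightarrow> circuit S indM C"
      unfolding circuit_def using LA[of C] LA[of "C - {x}" for x] CS by blast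
    moreover have "\<not> (mlambda S indM X + 1 = nullity indN Y)" using True nu0 by simp
    ultimately show ?thesis using CS unfolding L_def X_def Y_def by blast
  next
    case False
    then have nCS: "\<not> C \<subseteq> S" using Y_def assms(3) by blast
    have rX: "\<And>x. x \<in> C \<Longrightarrow> x \<notin> S \<Longrightarrow> (C - {x}) \<inter> S = X" using X_def by blast
    have rY: "\<And>x. x \<in> C \<Longrightarrow> x \<notin> S \<Longrightarrow> (C - {x}) \<inter> T = Y - {x}" using Y_def by blast
    have sX: "\<And>x. x \<in> C \<Longrightarrow> x \<in> S \<Longrightarrow> (C - {x}) \<inter> S = X - {x}" using X_def by blast
    have sY: "\<And>x. x \<in> C \<Longrightarrow> x \<in> S \<Longrightarrow> (C - {x}) \<inter> T = Y" using Y_def assms(3) by blast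
    have YnS: "\<And>y. y \<in> Y \<Longrightarrow> y \<notin> S \<and> y \<in> C" using Y_def assms(3) by blast
    have cYr: "\<And>y. y \<in> Y \<Longrightarrow> card (Y - {y}) + 1 = card Y"
      using finY card.remove[of Y] by simp
    have rYle: "mrank indN Y \<le> card Y" using rank_le_card[OF mN finY] .
    have "circuit (S \<union> T) L C \<longleftrightarrow>
       (indM X \<and> \<not> (\<exists>e. isthmus Y (restr_indep indN Y) e) \<and>
        mlambda S indM X + 1 = nullity indN Y)"
    proof
      assume circ: "circuit (S \<union> T) L C"
      then have nL: "\<not> L C" and Lx: "\<And>x. x \<in> C \<Longrightarrow> L (C - {x})" unfolding circuit_def by auto
      obtain y0 where y0: "y0 \<in> Y" using False by blast
      have "L (C - {y0})" using Lx YnS y0 by blast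
      then have iX: "indM X" and ny0: "nullity indN (Y - {y0}) \<le> mlambda S indM X"
        using Ldef rX[of y0] rY[of y0] YnS[OF y0] by auto
      have lt: "mlambda S indM X < nullity indN Y" using nL iX assms(4) Ldef X_def Y_def by auto
      have ny: "\<And>y. y \<in> Y \<Longrightarrow> nullity indN (Y - {y}) \<le> mlambda S indM X"
      proof -
        fix y assume yY: "y \<in> Y"
        have "L (C - {y})" using Lx YnS[OF yY] by blast
        then show "nullity indN (Y - {y}) \<le> mlambda S indM X"
          unfolding Ldef rX[of y, OF conjunct2[OF YnS[OF yY]] conjunct1[OF YnS[OF yY]]]
            rY[of y, OF conjunct2[OF YnS[OF yY]] conjunct1[OF YnS[OF yY]]] by blast
      qed
      have "mrank indN (Y - {y0}) \<le> mrank indN Y" by (rule rank_mono[OF mN]) blast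
      moreover have "mrank indN (Y - {y0}) \<le> card (Y - {y0})" using rank_le_card[OF mN] finY by blast
      ultimately have "nullity indN Y \<le> nullity indN (Y - {y0}) + 1"
        unfolding nullity_def using cYr[OF y0] by linarith
      then have eq: "mlambda S indM X + 1 = nullity indN Y" using ny0 lt by linarith
      have noi: "\<not> (\<exists>e. isthmus Y (restr_indep indN Y) e)"
      proof
        assume "\<exists>e. isthmus Y (restr_indep indN Y) e"
        then obtain e where e: "isthmus Y (restr_indep indN Y) e" by blast
        then have eY: "e \<in> Y" unfolding isthmus_def by blast
        have "mrank indN (Y - {e}) < mrank indN Y" using e isthmus_iff[OF mN eY] by blast
        then have "nullity indN Y \<le> nullity indN (Y - {e})"
          unfolding nullity_def using cYr[OF eY] rYle by linarith
        then show False using ny[OF eY] lt by linarith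
      qed
      show "indM X \<and> \<not> (\<exists>e. isthmus Y (restr_indep indN Y) e) \<and> mlambda S indM X + 1 = nullity indN Y"
        using iX noi eq by blast
    next
      assume H: "indM X \<and> \<not> (\<exists>e. isthmus Y (restr_indep indN Y) e) \<and> mlambda S indM X + 1 = nullity indN Y"
      then have iX: "indM X" and noi: "\<And>e. \<not> isthmus Y (restr_indep indN Y) e"
        and eq: "mlambda S indM X + 1 = nullity indN Y" by auto
      have nL: "\<not> L C" using Ldef eq X_def Y_def by auto
      have rXc: "mrank indM X = card X" using rank_indep[OF mM iX] .
      have cXS: "card X \<le> mrank indM S" using mrank_ge[OF mM _ iX] X_def by blast
      have Lx: "L (C - {x})" if xC: "x \<in> C" for x
      proof (cases "x \<in> S")
        case True
        have xX: "x \<in> X" using X_def xC True by blast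
        have iX': "indM (X - {x})" using m_down[OF mM iX, of "X - {x}"] by (simp add: Diff_subset)
        have cc: "card X = Suc (card (X - {x}))" using card.remove[OF finX xX] .
        have "mrank indM (X - {x}) = card (X - {x})" using rank_indep[OF mM iX'] .
        then have "mrank indM (X - {x}) + 1 = card X" using cc by linarith
        then have "mlambda S indM (X - {x}) = mlambda S indM X + 1"
          unfolding mlambda_def using rXc cXS by linarith
        then show ?thesis using Ldef sX[OF xC True] sY[OF xC True] iX' eq assms(4) by auto
      next
        case False
        have xY: "x \<in> Y" using Y_def xC False assms(4) by blast
        have "\<not> mrank indN (Y - {x}) < mrank indN Y" using isthmus_iff[OF mN xY] noi by blast
        moreover have "mrank indN (Y - {x}) \<le> mrank indN Y" by (rule rank_mono[OF mN]) (rule Diff_subset)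
        ultimately have "mrank indN (Y - {x}) = mrank indN Y" by linarith
        then have "nullity indN (Y - {x}) \<le> mlambda S indM X"
          unfolding nullity_def using cYr[OF xY] eq unfolding nullity_def by linarith
        then show ?thesis using Ldef rX[OF xC False] rY[OF xC False] iX assms(4) by auto
      qed
      show "circuit (S \<union> T) L C" unfolding circuit_def using assms(4) nL Lx by simp
    qed
    then show ?thesis using nCS unfolding L_def X_def Y_def by simp
  qed
qed

end
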